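(* If $G$ is a graph with no component of order exactly $2$, then $\gamma(S_2(G))=\gamma_{\rm cer}(S_2(G))$.
   Context: All graphs are finite and simple. The $2$-subdivision $S_2(G)$ of $G$ is obtained from $G$ by replacing each edge $e=uv$ by a path $u,u_e,v_e,v$, where $u_e,v_e$ are two new vertices. A set $D\subseteq V_G$ is a dominating set of $G$ if every vertex of $V_G-D$ has a neighbor in $D$; $\gamma(G)$ is the minimum cardinality of a dominating set. A set $D\subseteq V_G$ is a certified dominating set of $G$ if $D$ is a dominating set of $G$ and every vertex of $D$ has either zero or at least two neighbors in $V_G-D$; $\gamma_{\rm cer}(G)$ is the minimum cardinality of a certified dominating set. *)

theory Defs
  imports Main
begin

definition graph :: "'a set \<Rightarrow> ('a \<Rightarrow> 'a \<Rightarrow> bool) \<Rightarrow> bool" where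
  "graph V E \<longleftrightarrow> finite V \<and> (\<forall>u v. E u v \<longrightarrow> u \<in> V \<and> v \<in> V \<and> u \<noteq> v \<and> E v u)"

definition component :: "'a set \<Rightarrow> ('a \<Rightarrow> 'a \<Rightarrow> bool) \<Rightarrow> 'a \<Rightarrow> 'a set" where
  "component V E v = {w \<in> V. E\<^sup>*\<^sup>* v w}"

text \<open>Vertices of the 2-subdivision: original vertices, and for every edge e = uv
  the new vertex u_e, represented as Sub u v (the new vertex next to u on e).\<close>
datatype 'a svert = Orig 'a | Sub 'a 'a

definition S2_V :: "'a set \<Rightarrow> ('a \<Rightarrow> 'a \<Rightarrow> bool) \<Rightarrow> 'a svert set" where
  "S2_V V E = Orig ` V \<union> {Sub u v | u v. E u v}"

fun S2_E :: "('a \<Rightarrow> 'a \<Rightarrow> bool) \<Rightarrow> 'a svert \<Rightarrow> 'a svert \<Rightarrow> bool" where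
  "S2_E E (Orig u) (Orig v) = False"
| "S2_E E (Orig u) (Sub a b) = (E a b \<and> a = u)"
| "S2_E E (Sub a b) (Orig u) = (E a b \<and> a = u)"
| "S2_E E (Sub a b) (Sub c d) = (E a b \<and> c = b \<and> d = a)"

definition dominating :: "'a set \<Rightarrow> ('a \<Rightarrow> 'a \<Rightarrow> bool) \<Rightarrow> 'a set \<Rightarrow> bool" where
  "dominating V E D \<longleftrightarrow> D \<subseteq> V \<and> (\<forall>v \<in> V - D. \<exists>u \<in> D. E v u)"

definition certified_dominating :: "'a set \<Rightarrow> ('a \<Rightarrow> 'a \<Rightarrow> bool) \<Rightarrow> 'a set \<Rightarrow> bool" where
  "certified_dominating V E D \<longleftrightarrow> dominating V E D \<and>
     (\<forall>v \<in> D. card {u \<in> V - D. E v u} = 0 \<or> card {u \<in> V - D. E v u} \<ge> 2)"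

definition domination_number :: "'a set \<Rightarrow> ('a \<Rightarrow> 'a \<Rightarrow> bool) \<Rightarrow> nat" where
  "domination_number V E = Min {card D | D. dominating V E D}"

definition cert_domination_number :: "'a set \<Rightarrow> ('a \<Rightarrow> 'a \<Rightarrow> bool) \<Rightarrow> nat" where
  "cert_domination_number V E = Min {card D | D. certified_dominating V E D}"

end

theory Submission
  imports Defs
begin

lemma S2_fin:
  assumes "graph V E" shows "finite (S2_V V E)"
proof -
  have fV: "finite V" using assms by (simp add: graph_def)
  have "S2_V V E \<subseteq> Orig ` V \<union> (\<lambda>(u,v). Sub u v) ` (V \<times> V)"
    using assms unfolding S2_V_def graph_def by force
  moreover have "finite (Orig ` V \<union> (\<lambda>(u,v). Sub u v) ` (V \<times> V))" using fV by simp
  ultimately show ?thesis by (rule finite_subset)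
qed

lemma dom_lower:
  assumes "graph V E" "dominating (S2_V V E) (S2_E E) D"
  shows "card V \<le> card D"
proof -
  define g where "g x = (case x of Orig u \<Rightarrow> u | Sub u v \<Rightarrow> u)" for x :: "'a svert"
  have DS: "D \<subseteq> S2_V V E" using assms(2) by (simp add: dominating_def)
  have fD: "finite D" using S2_fin[OF assms(1)] DS finite_subset by blast
  have "V \<subseteq> g ` D"
  proof
    fix u assume u: "u \<in> V"
    have uS: "Orig u \<in> S2_V V E" using u by (simp add: S2_V_def)
    show "u \<in> g ` D"
    proof (cases "Orig u \<in> D")
      case True then show ?thesis by (force simp: g_def)
    next
      case False
      then obtain x where x: "x \<in> D" "S2_E E (Orig u) x"
        using assms(2) uS unfolding dominating_def by blast
      show ?thesis
      proof (cases x)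
        case (Orig a) then show ?thesis using x by simp
      next
        case (Sub a b) then have "g x = u" using x by (simp add: g_def)
        then show ?thesis using x by blast
      qed
    qed
  qed
  hence "card V \<le> card (g ` D)" using fD by (simp add: card_mono)
  also have "\<dots> \<le> card D" using fD by (rule card_image_le)
  finally show ?thesis .
qed

definition nb :: "('a \<Rightarrow> 'a \<Rightarrow> bool) \<Rightarrow> 'a \<Rightarrow> 'a set" where "nb E u = {w. E u w}"

definition ff :: "('a \<Rightarrow> 'a \<Rightarrow> bool) \<Rightarrow> 'a \<Rightarrow> 'a svert" where
  "ff E u = (if card (nb E u) = 1 then Sub u (the_elem (nb E u)) else Orig u)"

lemma ff_first: "ff E u = Orig a \<Longrightarrow> a = u \<and> card (nb E u) \<noteq> 1"
  by (auto simp: ff_def split: if_splits)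

lemma ff_first2: "ff E u = Sub a b \<Longrightarrow> a = u \<and> card (nb E u) = 1 \<and> b = the_elem (nb E u)"
  by (auto simp: ff_def split: if_splits)

lemma leaf_nb: "card (nb E u) = 1 \<Longrightarrow> nb E u = {the_elem (nb E u)}"
  by (metis card_1_singletonE the_elem_eq)

lemma comp_two:
  assumes g: "graph V E" and u: "u \<in> V" and nu: "nb E u = {w}" and nw: "nb E w = {u}"
  shows "component V E u = {u, w}"
proof -
  have Euw: "E u w" using nu by (auto simp: nb_def)
  have wV: "w \<in> V" using g Euw by (simp add: graph_def)
  have "E\<^sup>*\<^sup>* u x \<Longrightarrow> x \<in> {u, w}" for x
  proof (induction rule: rtranclp_induct)
    case base then show ?case by simp
  next
    case (step y z)
    then show ?case using nu nw by (auto simp: nb_def)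
  qed
  moreover have "E\<^sup>*\<^sup>* u w" using Euw by blast
  ultimately show ?thesis using u wV unfolding component_def by auto
qed

lemma cert_exists:
  assumes g: "graph V E" and c2: "\<forall>v \<in> V. card (component V E v) \<noteq> 2"
  shows "certified_dominating (S2_V V E) (S2_E E) (ff E ` V) \<and> card (ff E ` V) = card V"
proof -
  let ?D = "ff E ` V"
  let ?S = "S2_V V E"
  have fV: "finite V" using g by (simp add: graph_def)
  have nbV: "nb E u \<subseteq> V" for u using g by (auto simp: nb_def graph_def)
  have fnb: "finite (nb E u)" for u using nbV fV finite_subset by blast
  have fS: "finite ?S" by (rule S2_fin[OF g])
  have inj: "inj_on (ff E) V"
  proof (rule inj_onI)
    fix x y assume "ff E x = ff E y"
    then show "x = y"
      by (cases "ff E x") (metis ff_first ff_first2)+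
  qed
  have cardD: "card ?D = card V" using inj by (simp add: card_image)
  have nonleaf: "card (nb E w) \<ge> 2" if u: "u \<in> V" "card (nb E u) = 1" "w = the_elem (nb E u)" for u w
  proof -
    have nu: "nb E u = {w}" using leaf_nb[OF u(2)] u(3) by simp
    have Euw: "E u w" using nu by (auto simp: nb_def)
    have uw: "u \<in> nb E w" using g Euw by (auto simp: nb_def graph_def)
    have "card (nb E w) \<noteq> 0" using uw fnb by (metis card_0_eq empty_iff)
    moreover have "card (nb E w) \<noteq> 1"
    proof
      assume "card (nb E w) = 1"
      then have "nb E w = {u}" using uw by (metis card_1_singletonE singletonD)
      then have "component V E u = {u, w}" using comp_two[OF g u(1) nu] by simp
      moreover have "u \<noteq> w" using g Euw by (simp add: graph_def)
      ultimately have "card (component V E u) = 2" by simp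
      then show False using c2 u(1) by blast
    qed
    ultimately show ?thesis by simp
  qed
  have DS: "?D \<subseteq> ?S"
  proof
    fix x assume "x \<in> ?D"
    then obtain u where u: "u \<in> V" "x = ff E u" by blast
    show "x \<in> ?S"
    proof (cases "card (nb E u) = 1")
      case True
      then have "E u (the_elem (nb E u))" using leaf_nb[OF True] by (metis nb_def insertI1 mem_Collect_eq)
      then show ?thesis using u True by (auto simp: ff_def S2_V_def)
    next
      case False then show ?thesis using u by (auto simp: ff_def S2_V_def)
    qed
  qed
  have dom: "dominating ?S (S2_E E) ?D"
    unfolding dominating_def
  proof (intro conjI DS ballI)
    fix x assume x: "x \<in> ?S - ?D"
    show "\<exists>y\<in>?D. S2_E E x y"
    proof (cases x)
      case (Orig u)
      then have u: "u \<in> V" using x by (auto simp: S2_V_def)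
      have c1: "card (nb E u) = 1" using x Orig u by (force simp: ff_def split: if_splits)
      have "the_elem (nb E u) \<in> nb E u" using leaf_nb[OF c1] by blast
      then have "ff E u = Sub u (the_elem (nb E u))" "E u (the_elem (nb E u))"
        using c1 by (auto simp: ff_def nb_def)
      then show ?thesis using u Orig by force
    next
      case (Sub a b)
      then have Eab: "E a b" using x by (auto simp: S2_V_def)
      have aV: "a \<in> V" using g Eab by (simp add: graph_def)
      show ?thesis
      proof (cases "card (nb E a) = 1")
        case True
        then have "nb E a = {b}" using Eab leaf_nb by (metis nb_def mem_Collect_eq singletonD)
        then have "ff E a = x" using Sub True by (simp add: ff_def)
        then show ?thesis using x aV by blast
      next
        case False
        then have "ff E a = Orig a" by (simp add: ff_def)
        then show ?thesis using Sub Eab aV by force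
      qed
    qed
  qed
  have cert: "\<forall>v \<in> ?D. card {u \<in> ?S - ?D. S2_E E v u} = 0 \<or> card {u \<in> ?S - ?D. S2_E E v u} \<ge> 2"
  proof
    fix v assume "v \<in> ?D"
    then obtain u where u: "u \<in> V" "v = ff E u" by blast
    have fin: "finite {x \<in> ?S - ?D. S2_E E v x}" using fS by simp
    show "card {x \<in> ?S - ?D. S2_E E v x} = 0 \<or> card {x \<in> ?S - ?D. S2_E E v x} \<ge> 2"
    proof (cases "card (nb E u) = 1")
      case True
      define w where "w = the_elem (nb E u)"
      have nu: "nb E u = {w}" using leaf_nb[OF True] w_def by simp
      have Euw: "E u w" using nu by (auto simp: nb_def)
      have v: "v = Sub u w" using u True w_def by (simp add: ff_def)
      have w2: "card (nb E w) \<ge> 2" using nonleaf[OF u(1) True w_def] .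
      have o1: "Orig u \<notin> ?D" using True ff_first by (metis imageE)
      have o2: "Sub w u \<notin> ?D" proof assume "Sub w u \<in> ?D" then obtain y where "ff E y = Sub w u" by (metis imageE) from ff_first2[OF this] w2 show False by simp qed
      have wV: "w \<in> V" using g Euw by (simp add: graph_def)
      have Ewu: "E w u" using g Euw by (simp add: graph_def)
      have "{Orig u, Sub w u} \<subseteq> {x \<in> ?S - ?D. S2_E E v x}"
        using o1 o2 u(1) Euw Ewu v by (auto simp: S2_V_def)
      hence "card {Orig u, Sub w u} \<le> card {x \<in> ?S - ?D. S2_E E v x}"
        using fin by (rule card_mono[rotated])
      then show ?thesis by simp
    next
      case False
      have v: "v = Orig u" using u False by (simp add: ff_def)
      show ?thesis
      proof (cases "card (nb E u) = 0")
        case True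
        then have "nb E u = {}" using fnb by simp
        then have "{x \<in> ?S - ?D. S2_E E v x} = {}" using v
          by (auto simp: nb_def elim!: S2_E.elims)
        then show ?thesis by (metis card.empty)
      next
        case False2: False
        have "Sub u ` nb E u \<subseteq> {x \<in> ?S - ?D. S2_E E v x}"
        proof
          fix x assume "x \<in> Sub u ` nb E u"
          then obtain w where w: "w \<in> nb E u" "x = Sub u w" by blast
          have "x \<notin> ?D" proof assume "x \<in> ?D" then obtain y where "ff E y = Sub u w" using w(2) by (metis imageE) from ff_first2[OF this] False show False by simp qed
          then show "x \<in> {x \<in> ?S - ?D. S2_E E v x}" using w v by (auto simp: S2_V_def nb_def)
        qed
        hence "card (Sub u ` nb E u) \<le> card {x \<in> ?S - ?D. S2_E E v x}"
          using fin by (rule card_mono[rotated])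
        moreover have "card (Sub u ` nb E u) = card (nb E u)" by (simp add: card_image inj_on_def)
        ultimately show ?thesis using False False2 by simp
      qed
    qed
  qed
  show ?thesis using dom cert cardD by (simp add: certified_dominating_def)
qed

theorem corollary2p14:
  fixes V :: "'a set" and E :: "'a \<Rightarrow> 'a \<Rightarrow> bool"
  assumes "graph V E"
    and "\<forall>v \<in> V. card (component V E v) \<noteq> 2"
  shows "domination_number (S2_V V E) (S2_E E) = cert_domination_number (S2_V V E) (S2_E E)"
proof -
  let ?S = "S2_V V E"
  have fS: "finite ?S" by (rule S2_fin[OF assms(1)])
  have fin: "finite {card D | D. P D}" if "\<And>D. P D \<Longrightarrow> D \<subseteq> ?S" for P
  proof -
    have "{card D | D. P D} \<subseteq> {..card ?S}" using that fS by (auto intro: card_mono)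
    then show ?thesis using finite_subset by blast
  qed
  have odom: "dominating ?S (S2_E E) (Orig ` V)"
    unfolding dominating_def
  proof (intro conjI ballI)
    show "Orig ` V \<subseteq> ?S" by (auto simp: S2_V_def)
  next
    fix x assume x: "x \<in> ?S - Orig ` V"
    then obtain a b where "x = Sub a b" "E a b" by (auto simp: S2_V_def)
    moreover then have "a \<in> V" using assms(1) by (simp add: graph_def)
    ultimately show "\<exists>u\<in>Orig ` V. S2_E E x u" by force
  qed
  have cO: "card (Orig ` V) = card V" by (rule card_image) (auto simp: inj_on_def)
  have "domination_number ?S (S2_E E) = card V"
    unfolding domination_number_def
    apply (rule Min_eqI)
      apply (rule fin, simp add: dominating_def)
    using dom_lower[OF assms(1)] apply blast
    using odom cO by (metis (mono_tags, lifting) mem_Collect_eq)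
  moreover have "cert_domination_number ?S (S2_E E) = card V"
    unfolding cert_domination_number_def
    apply (rule Min_eqI)
      apply (rule fin, simp add: certified_dominating_def dominating_def)
    using dom_lower[OF assms(1)] apply (auto simp: certified_dominating_def)[1]
    using cert_exists[OF assms] by (metis (mono_tags, lifting) mem_Collect_eq)
  ultimately show ?thesis by simp
qed

end
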